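(* Let $\Bbbk$ be an algebraically closed field of characteristic zero, $G$ a finite group, $\chi:G\to\Bbbk^\times$ a linear character, $g\in Z(G)$, $n\geq 2$ the multiplicative order of $\chi(g)$, and $H$ the $\Bbbk$-algebra generated by $\Bbbk G$ and $z$ with relations $z^n=0$, $zs=\chi(s)sz$ ($s\in G$). Then for any nonzero $h_0,h_1,\dots,h_{n-1}\in\Bbbk G$, the ideals $(h_0),(zh_1),\dots,(z^{n-1}h_{n-1})$ are pairwise distinct.
   Context: $(a)$ denotes the two-sided ideal of $H$ generated by $a$. *)

theory Defs
  imports "HOL-Algebra.Ideal" "HOL-Computational_Algebra.Polynomial"
begin

definition alg_closed :: "'k::field itself \<Rightarrow> bool" where
  "alg_closed _ \<longleftrightarrow> (\<forall>p::'k poly. 0 < degree p \<longrightarrow> (\<exists>x. poly p x = 0))"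

(* The algebra H generated by kG and z subject to z^n = 0, z s = chi(s) s z,
   realised on its normal-form basis { z^i s : 0 \<le> i < n, s \<in> G }.
   An element is a coefficient function c :: nat \<times> 'g \<Rightarrow> 'k, c(i,s) being
   the coefficient of z^i s; it vanishes outside {0..<n} \<times> carrier G.
   Product rule: (z^i s)(z^j t) = chi(s)^(-j) z^(i+j) (s t)  (= 0 if i+j \<ge> n),
   since s z = chi(s)^(-1) z s. *)
definition skew_alg :: "('g, 'b) monoid_scheme \<Rightarrow> ('g \<Rightarrow> 'k::field) \<Rightarrow> nat \<Rightarrow> ((nat \<times> 'g) \<Rightarrow> 'k) ring" where
  "skew_alg G \<chi> n = \<lparr>
     carrier = {c. \<forall>k u. (n \<le> k \<or> u \<notin> carrier G) \<longrightarrow> c (k, u) = 0},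
     monoid.mult = (\<lambda>a b (k, u). if k < n \<and> u \<in> carrier G then
               (\<Sum>i\<in>{..k}. \<Sum>s\<in>carrier G.
                   inverse (\<chi> s) ^ (k - i) * a (i, s) * b (k - i, inv\<^bsub>G\<^esub> s \<otimes>\<^bsub>G\<^esub> u))
             else 0),
     monoid.one = (\<lambda>(k, u). if k = 0 \<and> u = \<one>\<^bsub>G\<^esub> then 1 else 0),
     ring.zero = (\<lambda>_. 0),
     ring.add = (\<lambda>a b x. a x + b x) \<rparr>"

definition zpow_times :: "('g, 'b) monoid_scheme \<Rightarrow> nat \<Rightarrow> ('g \<Rightarrow> 'k::field) \<Rightarrow> (nat \<times> 'g) \<Rightarrow> 'k" where
  "zpow_times G i h = (\<lambda>(k, u). if k = i \<and> u \<in> carrier G then h u else 0)"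

end

theory Submission
  imports Defs
begin


context
  fixes G :: "('g,'b) monoid_scheme" and \<chi> :: "'g \<Rightarrow> 'k::field" and n :: nat
  assumes grp: "group G" and fin: "finite (carrier G)"
    and nz: "\<And>s. s \<in> carrier G \<Longrightarrow> \<chi> s \<noteq> 0"
    and chim: "\<And>s t. s \<in> carrier G \<Longrightarrow> t \<in> carrier G \<Longrightarrow> \<chi> (s \<otimes>\<^bsub>G\<^esub> t) = \<chi> s * \<chi> t"
    and npos: "0 < n"
begin

lemma carrier_R: "c \<in> carrier (skew_alg G \<chi> n) \<longleftrightarrow> (\<forall>k u. (n \<le> k \<or> u \<notin> carrier G) \<longrightarrow> c (k, u) = 0)"
  by (simp add: skew_alg_def)

lemma mult_R: "(a \<otimes>\<^bsub>skew_alg G \<chi> n\<^esub> b) (k, u) = (if k < n \<and> u \<in> carrier G then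
               (\<Sum>i\<in>{..k}. \<Sum>s\<in>carrier G.
                   inverse (\<chi> s) ^ (k - i) * a (i, s) * b (k - i, inv\<^bsub>G\<^esub> s \<otimes>\<^bsub>G\<^esub> u))
             else 0)"
  by (simp add: skew_alg_def)

lemma add_R: "(a \<oplus>\<^bsub>skew_alg G \<chi> n\<^esub> b) x = a x + b x"
  by (simp add: skew_alg_def)

lemma zero_R: "\<zero>\<^bsub>skew_alg G \<chi> n\<^esub> = (\<lambda>_. 0)"
  by (simp add: skew_alg_def)

lemma one_R: "\<one>\<^bsub>skew_alg G \<chi> n\<^esub> = (\<lambda>(k, u). if k = 0 \<and> u = \<one>\<^bsub>G\<^esub> then 1 else 0)"
  by (simp add: skew_alg_def)

lemma tri: "(\<Sum>i\<le>(k::nat). \<Sum>p\<le>i. W p (i - p)) = (\<Sum>p\<le>k. \<Sum>q\<le>k - p. (W p q :: 'a::comm_monoid_add))"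
proof -
  have "(\<Sum>i\<le>k. \<Sum>p\<le>i. W p (i - p)) = (\<Sum>(p,q)\<in>{(p,q). p+q \<le> k}. W p q)"
    by (rule sum.triangle_reindex_eq[symmetric])
  also have "\<dots> = (\<Sum>(p,q)\<in>(SIGMA p:{..k}. {..k-p}). W p q)"
    by (rule sum.cong) auto
  also have "\<dots> = (\<Sum>p\<le>k. \<Sum>q\<le>k - p. W p q)"
    by (rule sum.Sigma[symmetric]) auto
  finally show ?thesis .
qed

lemma reidx:
  assumes t: "t \<in> carrier G" and u: "u \<in> carrier G" and pi: "p \<le> i" and ik: "i \<le> k"
  shows "(\<Sum>s\<in>carrier G. inverse (\<chi> s) ^ (k - i) * (inverse (\<chi> t) ^ (i - p) * a (p, t) * b (i - p, inv\<^bsub>G\<^esub> t \<otimes>\<^bsub>G\<^esub> s)) * c (k - i, inv\<^bsub>G\<^esub> s \<otimes>\<^bsub>G\<^esub> u))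
     = (\<Sum>r\<in>carrier G. inverse (\<chi> t) ^ (k - p) * inverse (\<chi> r) ^ (k - p - (i - p)) * a (p, t) * b (i - p, r)
                  * c (k - p - (i - p), inv\<^bsub>G\<^esub> r \<otimes>\<^bsub>G\<^esub> (inv\<^bsub>G\<^esub> t \<otimes>\<^bsub>G\<^esub> u)))"
proof (rule sym, rule sum.reindex_bij_witness[where i="\<lambda>s. inv\<^bsub>G\<^esub> t \<otimes>\<^bsub>G\<^esub> s" and j="\<lambda>r. t \<otimes>\<^bsub>G\<^esub> r"])
  fix r assume r: "r \<in> carrier G"
  have e4: "inv\<^bsub>G\<^esub> t \<otimes>\<^bsub>G\<^esub> (t \<otimes>\<^bsub>G\<^esub> r) = r"
    using r t grp by (metis group.l_inv group.inv_closed group.is_monoid monoid.m_assoc monoid.l_one)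
  then show "inv\<^bsub>G\<^esub> t \<otimes>\<^bsub>G\<^esub> (t \<otimes>\<^bsub>G\<^esub> r) = r" .
  show "t \<otimes>\<^bsub>G\<^esub> r \<in> carrier G" using r t grp by (simp add: group.is_monoid monoid.m_closed)
  have e1: "k - p - (i - p) = k - i" using ik pi by auto
  have e2: "inverse (\<chi> (t \<otimes>\<^bsub>G\<^esub> r)) ^ (k - i) * inverse (\<chi> t) ^ (i - p) = inverse (\<chi> t) ^ (k - p) * inverse (\<chi> r) ^ (k - i)"
  proof -
    have "inverse (\<chi> (t \<otimes>\<^bsub>G\<^esub> r)) ^ (k - i) * inverse (\<chi> t) ^ (i - p) = inverse (\<chi> t) ^ ((k - i) + (i - p)) * inverse (\<chi> r) ^ (k - i)"
      using chim[OF t r] by (simp add: power_mult_distrib power_add)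
    also have "(k - i) + (i - p) = k - p" using ik pi by auto
    finally show ?thesis .
  qed
  have e3: "inv\<^bsub>G\<^esub> (t \<otimes>\<^bsub>G\<^esub> r) \<otimes>\<^bsub>G\<^esub> u = inv\<^bsub>G\<^esub> r \<otimes>\<^bsub>G\<^esub> (inv\<^bsub>G\<^esub> t \<otimes>\<^bsub>G\<^esub> u)"
    using grp t r u by (simp add: group.inv_mult_group group.is_monoid monoid.m_assoc group.inv_closed)
  show "inverse (\<chi> (t \<otimes>\<^bsub>G\<^esub> r)) ^ (k - i) * (inverse (\<chi> t) ^ (i - p) * a (p, t) * b (i - p, inv\<^bsub>G\<^esub> t \<otimes>\<^bsub>G\<^esub> (t \<otimes>\<^bsub>G\<^esub> r))) * c (k - i, inv\<^bsub>G\<^esub> (t \<otimes>\<^bsub>G\<^esub> r) \<otimes>\<^bsub>G\<^esub> u)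
    = inverse (\<chi> t) ^ (k - p) * inverse (\<chi> r) ^ (k - p - (i - p)) * a (p, t) * b (i - p, r)
                  * c (k - p - (i - p), inv\<^bsub>G\<^esub> r \<otimes>\<^bsub>G\<^esub> (inv\<^bsub>G\<^esub> t \<otimes>\<^bsub>G\<^esub> u))"
    by (simp only: e1 e3 e4 mult.assoc[symmetric] e2)
next
  fix s assume s: "s \<in> carrier G"
  show "inv\<^bsub>G\<^esub> t \<otimes>\<^bsub>G\<^esub> s \<in> carrier G" using s t grp by (simp add: group.is_monoid monoid.m_closed group.inv_closed)
  show "t \<otimes>\<^bsub>G\<^esub> (inv\<^bsub>G\<^esub> t \<otimes>\<^bsub>G\<^esub> s) = s" using s t grp by (metis group.r_inv group.inv_closed group.is_monoid monoid.m_assoc monoid.l_one)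
qed

lemma R_assoc:
  assumes a: "a \<in> carrier (skew_alg G \<chi> n)" and b: "b \<in> carrier (skew_alg G \<chi> n)"
    and c: "c \<in> carrier (skew_alg G \<chi> n)"
  shows "(a \<otimes>\<^bsub>skew_alg G \<chi> n\<^esub> b) \<otimes>\<^bsub>skew_alg G \<chi> n\<^esub> c = a \<otimes>\<^bsub>skew_alg G \<chi> n\<^esub> (b \<otimes>\<^bsub>skew_alg G \<chi> n\<^esub> c)"
proof (rule ext, clarify)
  fix k u
  let ?R = "skew_alg G \<chi> n"
  let ?ci = "\<lambda>s. inverse (\<chi> s)"
  show "((a \<otimes>\<^bsub>?R\<^esub> b) \<otimes>\<^bsub>?R\<^esub> c) (k, u) = (a \<otimes>\<^bsub>?R\<^esub> (b \<otimes>\<^bsub>?R\<^esub> c)) (k, u)"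
  proof (cases "k < n \<and> u \<in> carrier G")
    case False then show ?thesis apply (subst (1 2) mult_R) apply (simp only: if_not_P[OF False] if_False) done
  next
    case True
    hence kn: "k < n" and u: "u \<in> carrier G" by auto
    define W where "W p q = (\<Sum>t\<in>carrier G. \<Sum>r\<in>carrier G. ?ci t ^ (k - p) * ?ci r ^ (k - p - q) * a (p, t) * b (q, r)
        * c (k - p - q, inv\<^bsub>G\<^esub> r \<otimes>\<^bsub>G\<^esub> (inv\<^bsub>G\<^esub> t \<otimes>\<^bsub>G\<^esub> u)))" for p q
    have L: "((a \<otimes>\<^bsub>?R\<^esub> b) \<otimes>\<^bsub>?R\<^esub> c) (k, u) = (\<Sum>i\<le>k. \<Sum>p\<le>i. W p (i - p))"
    proof -
      have "((a \<otimes>\<^bsub>?R\<^esub> b) \<otimes>\<^bsub>?R\<^esub> c) (k, u) = (\<Sum>i\<le>k. \<Sum>s\<in>carrier G. \<Sum>p\<le>i. \<Sum>t\<in>carrier G.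
           ?ci s ^ (k - i) * (?ci t ^ (i - p) * a (p, t) * b (i - p, inv\<^bsub>G\<^esub> t \<otimes>\<^bsub>G\<^esub> s)) * c (k - i, inv\<^bsub>G\<^esub> s \<otimes>\<^bsub>G\<^esub> u))"
      proof -
        have e: "(a \<otimes>\<^bsub>?R\<^esub> b) (i, s) = (\<Sum>p\<le>i. \<Sum>t\<in>carrier G. ?ci t ^ (i - p) * a (p, t) * b (i - p, inv\<^bsub>G\<^esub> t \<otimes>\<^bsub>G\<^esub> s))"
          if "i \<in> {..k}" "s \<in> carrier G" for i s
        proof -
          have "i < n \<and> s \<in> carrier G" using that kn by auto
          then show ?thesis by (subst mult_R) (simp only: if_P)
        qed
        have "((a \<otimes>\<^bsub>?R\<^esub> b) \<otimes>\<^bsub>?R\<^esub> c) (k, u) = (\<Sum>i\<le>k. \<Sum>s\<in>carrier G. ?ci s ^ (k - i) * (a \<otimes>\<^bsub>?R\<^esub> b) (i, s) * c (k - i, inv\<^bsub>G\<^esub> s \<otimes>\<^bsub>G\<^esub> u))"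
          by (subst mult_R) (simp only: if_P[OF True])
        also have "\<dots> = (\<Sum>i\<le>k. \<Sum>s\<in>carrier G. ?ci s ^ (k - i) * (\<Sum>p\<le>i. \<Sum>t\<in>carrier G. ?ci t ^ (i - p) * a (p, t) * b (i - p, inv\<^bsub>G\<^esub> t \<otimes>\<^bsub>G\<^esub> s)) * c (k - i, inv\<^bsub>G\<^esub> s \<otimes>\<^bsub>G\<^esub> u))"
          by (intro sum.cong[OF refl]) (simp only: e)
        also have "\<dots> = (\<Sum>i\<le>k. \<Sum>s\<in>carrier G. \<Sum>p\<le>i. \<Sum>t\<in>carrier G.
           ?ci s ^ (k - i) * (?ci t ^ (i - p) * a (p, t) * b (i - p, inv\<^bsub>G\<^esub> t \<otimes>\<^bsub>G\<^esub> s)) * c (k - i, inv\<^bsub>G\<^esub> s \<otimes>\<^bsub>G\<^esub> u))"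
          by (simp only: sum_distrib_left sum_distrib_right)
        finally show ?thesis .
      qed
      also have "\<dots> = (\<Sum>i\<le>k. \<Sum>p\<le>i. W p (i - p))"
      proof (rule sum.cong[OF refl])
        fix i assume i: "i \<in> {..k}"
        have "(\<Sum>s\<in>carrier G. \<Sum>p\<le>i. \<Sum>t\<in>carrier G.
           ?ci s ^ (k - i) * (?ci t ^ (i - p) * a (p, t) * b (i - p, inv\<^bsub>G\<^esub> t \<otimes>\<^bsub>G\<^esub> s)) * c (k - i, inv\<^bsub>G\<^esub> s \<otimes>\<^bsub>G\<^esub> u))
          = (\<Sum>p\<le>i. \<Sum>t\<in>carrier G. \<Sum>s\<in>carrier G.
           ?ci s ^ (k - i) * (?ci t ^ (i - p) * a (p, t) * b (i - p, inv\<^bsub>G\<^esub> t \<otimes>\<^bsub>G\<^esub> s)) * c (k - i, inv\<^bsub>G\<^esub> s \<otimes>\<^bsub>G\<^esub> u))"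
          by (subst sum.swap, rule sum.cong[OF refl], rule sum.swap)
        also have "\<dots> = (\<Sum>p\<le>i. W p (i - p))"
          unfolding W_def
          apply (rule sum.cong[OF refl])
          apply (rule sum.cong[OF refl])
          apply (rule reidx)
          using i u by auto
        finally show "(\<Sum>s\<in>carrier G. \<Sum>p\<le>i. \<Sum>t\<in>carrier G.
           ?ci s ^ (k - i) * (?ci t ^ (i - p) * a (p, t) * b (i - p, inv\<^bsub>G\<^esub> t \<otimes>\<^bsub>G\<^esub> s)) * c (k - i, inv\<^bsub>G\<^esub> s \<otimes>\<^bsub>G\<^esub> u))
          = (\<Sum>p\<le>i. W p (i - p))" .
      qed
      finally show ?thesis .
    qed
    have Rr: "(a \<otimes>\<^bsub>?R\<^esub> (b \<otimes>\<^bsub>?R\<^esub> c)) (k, u) = (\<Sum>p\<le>k. \<Sum>q\<le>k - p. W p q)"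
    proof -
      have "(a \<otimes>\<^bsub>?R\<^esub> (b \<otimes>\<^bsub>?R\<^esub> c)) (k, u) = (\<Sum>p\<le>k. \<Sum>t\<in>carrier G. \<Sum>q\<le>k - p. \<Sum>r\<in>carrier G.
          ?ci t ^ (k - p) * a (p, t) * (?ci r ^ (k - p - q) * b (q, r) * c (k - p - q, inv\<^bsub>G\<^esub> r \<otimes>\<^bsub>G\<^esub> (inv\<^bsub>G\<^esub> t \<otimes>\<^bsub>G\<^esub> u))))"
      proof -
        have e: "(b \<otimes>\<^bsub>?R\<^esub> c) (k - p, inv\<^bsub>G\<^esub> t \<otimes>\<^bsub>G\<^esub> u) = (\<Sum>q\<le>k - p. \<Sum>r\<in>carrier G. ?ci r ^ (k - p - q) * b (q, r) * c (k - p - q, inv\<^bsub>G\<^esub> r \<otimes>\<^bsub>G\<^esub> (inv\<^bsub>G\<^esub> t \<otimes>\<^bsub>G\<^esub> u)))"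
          if "p \<in> {..k}" "t \<in> carrier G" for p t
        proof -
          have "inv\<^bsub>G\<^esub> t \<otimes>\<^bsub>G\<^esub> u \<in> carrier G" using that u grp by (simp add: group.is_monoid monoid.m_closed group.inv_closed)
          then have "k - p < n \<and> inv\<^bsub>G\<^esub> t \<otimes>\<^bsub>G\<^esub> u \<in> carrier G" using kn by auto
          then show ?thesis by (subst mult_R) (simp only: if_P)
        qed
        have "(a \<otimes>\<^bsub>?R\<^esub> (b \<otimes>\<^bsub>?R\<^esub> c)) (k, u) = (\<Sum>p\<le>k. \<Sum>t\<in>carrier G. ?ci t ^ (k - p) * a (p, t) * (b \<otimes>\<^bsub>?R\<^esub> c) (k - p, inv\<^bsub>G\<^esub> t \<otimes>\<^bsub>G\<^esub> u))"
          by (subst mult_R) (simp only: if_P[OF True])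
        also have "\<dots> = (\<Sum>p\<le>k. \<Sum>t\<in>carrier G. ?ci t ^ (k - p) * a (p, t) * (\<Sum>q\<le>k - p. \<Sum>r\<in>carrier G. ?ci r ^ (k - p - q) * b (q, r) * c (k - p - q, inv\<^bsub>G\<^esub> r \<otimes>\<^bsub>G\<^esub> (inv\<^bsub>G\<^esub> t \<otimes>\<^bsub>G\<^esub> u))))"
          by (intro sum.cong[OF refl]) (simp only: e)
        also have "\<dots> = (\<Sum>p\<le>k. \<Sum>t\<in>carrier G. \<Sum>q\<le>k - p. \<Sum>r\<in>carrier G.
          ?ci t ^ (k - p) * a (p, t) * (?ci r ^ (k - p - q) * b (q, r) * c (k - p - q, inv\<^bsub>G\<^esub> r \<otimes>\<^bsub>G\<^esub> (inv\<^bsub>G\<^esub> t \<otimes>\<^bsub>G\<^esub> u))))"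
          by (simp only: sum_distrib_left)
        finally show ?thesis .
      qed
      also have "\<dots> = (\<Sum>p\<le>k. \<Sum>q\<le>k - p. W p q)"
        unfolding W_def
        by (rule sum.cong[OF refl], subst sum.swap, simp only: mult.assoc mult.left_commute[of "a _"])
      finally show ?thesis .
    qed
    show ?thesis using L Rr tri by simp
  qed
qed

lemma chi_one: "\<chi> \<one>\<^bsub>G\<^esub> = 1"
proof -
  have o: "\<one>\<^bsub>G\<^esub> \<in> carrier G" using grp by (simp add: group.is_monoid monoid.one_closed)
  have "\<chi> \<one>\<^bsub>G\<^esub> = \<chi> \<one>\<^bsub>G\<^esub> * \<chi> \<one>\<^bsub>G\<^esub>" using chim[OF o o] grp o by (simp add: group.is_monoid monoid.l_one)
  then show ?thesis using nz[OF o] by simp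
qed

lemma R_m_closed:
  "a \<otimes>\<^bsub>skew_alg G \<chi> n\<^esub> b \<in> carrier (skew_alg G \<chi> n)"
  unfolding carrier_R by (auto simp: mult_R)

lemma R_one_closed: "\<one>\<^bsub>skew_alg G \<chi> n\<^esub> \<in> carrier (skew_alg G \<chi> n)"
  using npos unfolding carrier_R one_R using grp by (auto simp: group.is_monoid monoid.one_closed)

lemma R_l_one:
  assumes b: "b \<in> carrier (skew_alg G \<chi> n)"
  shows "\<one>\<^bsub>skew_alg G \<chi> n\<^esub> \<otimes>\<^bsub>skew_alg G \<chi> n\<^esub> b = b"
proof (rule ext, clarify)
  fix k u
  show "(\<one>\<^bsub>skew_alg G \<chi> n\<^esub> \<otimes>\<^bsub>skew_alg G \<chi> n\<^esub> b) (k, u) = b (k, u)"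
  proof (cases "k < n \<and> u \<in> carrier G")
    case False
    have "b (k, u) = 0" using b False unfolding carrier_R by auto
    then show ?thesis by (subst mult_R) (simp only: if_not_P[OF False] if_False)
  next
    case True
    have o: "\<one>\<^bsub>G\<^esub> \<in> carrier G" using grp by (simp add: group.is_monoid monoid.one_closed)
    have iu: "inv\<^bsub>G\<^esub> \<one>\<^bsub>G\<^esub> \<otimes>\<^bsub>G\<^esub> u = u" using True grp by (simp add: monoid.inv_one group.is_monoid monoid.l_one)
    have "(\<one>\<^bsub>skew_alg G \<chi> n\<^esub> \<otimes>\<^bsub>skew_alg G \<chi> n\<^esub> b) (k, u)
       = (\<Sum>i\<le>k. \<Sum>s\<in>carrier G. inverse (\<chi> s) ^ (k - i) * (if i = 0 \<and> s = \<one>\<^bsub>G\<^esub> then 1 else 0) * b (k - i, inv\<^bsub>G\<^esub> s \<otimes>\<^bsub>G\<^esub> u))"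
      by (subst mult_R) (simp only: if_P[OF True] one_R prod.case)
    also have "\<dots> = (\<Sum>i\<le>k. if i = 0 then b (k, u) else 0)"
    proof (rule sum.cong[OF refl])
      fix i assume i: "i \<in> {..k}"
      show "(\<Sum>s\<in>carrier G. inverse (\<chi> s) ^ (k - i) * (if i = 0 \<and> s = \<one>\<^bsub>G\<^esub> then 1 else 0) * b (k - i, inv\<^bsub>G\<^esub> s \<otimes>\<^bsub>G\<^esub> u))
        = (if i = 0 then b (k, u) else 0)"
      proof (cases "i = 0")
        case True
        have "(\<Sum>s\<in>carrier G. inverse (\<chi> s) ^ (k - i) * (if i = 0 \<and> s = \<one>\<^bsub>G\<^esub> then 1 else 0) * b (k - i, inv\<^bsub>G\<^esub> s \<otimes>\<^bsub>G\<^esub> u))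
           = (\<Sum>s\<in>carrier G. if s = \<one>\<^bsub>G\<^esub> then b (k, u) else 0)"
          by (rule sum.cong[OF refl]) (use True iu chi_one in auto)
        then show ?thesis using True o fin by simp
      next
        case False then show ?thesis by simp
      qed
    qed
    also have "\<dots> = b (k, u)" by simp
    finally show ?thesis .
  qed
qed

lemma R_r_one:
  assumes b: "b \<in> carrier (skew_alg G \<chi> n)"
  shows "b \<otimes>\<^bsub>skew_alg G \<chi> n\<^esub> \<one>\<^bsub>skew_alg G \<chi> n\<^esub> = b"
proof (rule ext, clarify)
  fix k u
  show "(b \<otimes>\<^bsub>skew_alg G \<chi> n\<^esub> \<one>\<^bsub>skew_alg G \<chi> n\<^esub>) (k, u) = b (k, u)"
  proof (cases "k < n \<and> u \<in> carrier G")
    case False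
    have "b (k, u) = 0" using b False unfolding carrier_R by auto
    then show ?thesis by (subst mult_R) (simp only: if_not_P[OF False] if_False)
  next
    case True
    have iu: "inv\<^bsub>G\<^esub> s \<otimes>\<^bsub>G\<^esub> u = \<one>\<^bsub>G\<^esub> \<longleftrightarrow> s = u" if "s \<in> carrier G" for s
    proof
      interpret G: group G by (rule grp)
      assume e: "inv\<^bsub>G\<^esub> s \<otimes>\<^bsub>G\<^esub> u = \<one>\<^bsub>G\<^esub>"
      have "inv\<^bsub>G\<^esub> u = inv\<^bsub>G\<^esub> s" using G.inv_equality[OF e] True that by simp
      then show "s = u" using True that by (metis G.inv_inv)
    next
      interpret G: group G by (rule grp)
      assume "s = u" then show "inv\<^bsub>G\<^esub> s \<otimes>\<^bsub>G\<^esub> u = \<one>\<^bsub>G\<^esub>" using True by simp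
    qed
    have "(b \<otimes>\<^bsub>skew_alg G \<chi> n\<^esub> \<one>\<^bsub>skew_alg G \<chi> n\<^esub>) (k, u)
       = (\<Sum>i\<le>k. \<Sum>s\<in>carrier G. inverse (\<chi> s) ^ (k - i) * b (i, s) * (if k - i = 0 \<and> inv\<^bsub>G\<^esub> s \<otimes>\<^bsub>G\<^esub> u = \<one>\<^bsub>G\<^esub> then 1 else 0))"
      by (subst mult_R) (simp only: if_P[OF True] one_R prod.case)
    also have "\<dots> = (\<Sum>i\<le>k. if i = k then b (k, u) else 0)"
    proof (rule sum.cong[OF refl])
      fix i assume i: "i \<in> {..k}"
      show "(\<Sum>s\<in>carrier G. inverse (\<chi> s) ^ (k - i) * b (i, s) * (if k - i = 0 \<and> inv\<^bsub>G\<^esub> s \<otimes>\<^bsub>G\<^esub> u = \<one>\<^bsub>G\<^esub> then 1 else 0))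
        = (if i = k then b (k, u) else 0)"
      proof (cases "i = k")
        case True
        have "(\<Sum>s\<in>carrier G. inverse (\<chi> s) ^ (k - i) * b (i, s) * (if k - i = 0 \<and> inv\<^bsub>G\<^esub> s \<otimes>\<^bsub>G\<^esub> u = \<one>\<^bsub>G\<^esub> then 1 else 0))
           = (\<Sum>s\<in>carrier G. if s = u then b (k, u) else 0)"
          by (rule sum.cong[OF refl]) (use True iu in auto)
        then show ?thesis using True \<open>k < n \<and> u \<in> carrier G\<close> fin by simp
      next
        case False then show ?thesis using i by auto
      qed
    qed
    also have "\<dots> = b (k, u)" by simp
    finally show ?thesis .
  qed
qed

lemma R_monoid: "monoid (skew_alg G \<chi> n)"
  by (rule monoidI) (auto simp: R_m_closed R_one_closed R_assoc R_l_one R_r_one)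

lemma R_abelian_group: "abelian_group (skew_alg G \<chi> n)"
proof (rule abelian_groupI)
  show "\<zero>\<^bsub>skew_alg G \<chi> n\<^esub> \<in> carrier (skew_alg G \<chi> n)" by (simp add: zero_R carrier_R)
  fix x y z
  assume x: "x \<in> carrier (skew_alg G \<chi> n)"
  show "\<zero>\<^bsub>skew_alg G \<chi> n\<^esub> \<oplus>\<^bsub>skew_alg G \<chi> n\<^esub> x = x" by (simp add: zero_R add_R fun_eq_iff)
  show "\<exists>y\<in>carrier (skew_alg G \<chi> n). y \<oplus>\<^bsub>skew_alg G \<chi> n\<^esub> x = \<zero>\<^bsub>skew_alg G \<chi> n\<^esub>"
    by (rule bexI[of _ "\<lambda>v. - x v"]) (use x in \<open>auto simp: zero_R add_R carrier_R fun_eq_iff\<close>)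
  assume y: "y \<in> carrier (skew_alg G \<chi> n)"
  show "x \<oplus>\<^bsub>skew_alg G \<chi> n\<^esub> y \<in> carrier (skew_alg G \<chi> n)" using x y by (simp add: add_R carrier_R)
  show "x \<oplus>\<^bsub>skew_alg G \<chi> n\<^esub> y = y \<oplus>\<^bsub>skew_alg G \<chi> n\<^esub> x" by (simp add: add_R fun_eq_iff add.commute)
  show "x \<oplus>\<^bsub>skew_alg G \<chi> n\<^esub> y \<oplus>\<^bsub>skew_alg G \<chi> n\<^esub> z = x \<oplus>\<^bsub>skew_alg G \<chi> n\<^esub> (y \<oplus>\<^bsub>skew_alg G \<chi> n\<^esub> z)"
    by (simp add: add_R fun_eq_iff add.assoc)
qed

lemma R_ring: "ring (skew_alg G \<chi> n)"
proof (rule ringI[OF R_abelian_group R_monoid])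
  fix x y z
  show "(x \<oplus>\<^bsub>skew_alg G \<chi> n\<^esub> y) \<otimes>\<^bsub>skew_alg G \<chi> n\<^esub> z = x \<otimes>\<^bsub>skew_alg G \<chi> n\<^esub> z \<oplus>\<^bsub>skew_alg G \<chi> n\<^esub> y \<otimes>\<^bsub>skew_alg G \<chi> n\<^esub> z" (is "?l = ?r")
    proof (rule ext, clarify)
    fix a b
    show "?l (a, b) = ?r (a, b)"
    proof (cases "a < n \<and> b \<in> carrier G")
      case True then show ?thesis by (simp only: mult_R add_R distrib_left distrib_right sum.distrib if_True simp_thms)
    next
      case False then show ?thesis by (simp only: mult_R add_R if_not_P[OF False] if_False add_0_left)
    qed
  qed
  show "z \<otimes>\<^bsub>skew_alg G \<chi> n\<^esub> (x \<oplus>\<^bsub>skew_alg G \<chi> n\<^esub> y) = z \<otimes>\<^bsub>skew_alg G \<chi> n\<^esub> x \<oplus>\<^bsub>skew_alg G \<chi> n\<^esub> z \<otimes>\<^bsub>skew_alg G \<chi> n\<^esub> y" (is "?l = ?r")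
    proof (rule ext, clarify)
    fix a b
    show "?l (a, b) = ?r (a, b)"
    proof (cases "a < n \<and> b \<in> carrier G")
      case True then show ?thesis by (simp only: mult_R add_R distrib_left distrib_right sum.distrib if_True simp_thms)
    next
      case False then show ?thesis by (simp only: mult_R add_R if_not_P[OF False] if_False add_0_left)
    qed
  qed
qed

lemma J_ideal: "ideal {c \<in> carrier (skew_alg G \<chi> n). \<forall>k<j. \<forall>u. c (k, u) = 0} (skew_alg G \<chi> n)"
proof -
  interpret R: ring "skew_alg G \<chi> n" by (rule R_ring)
  show ?thesis
  proof (rule idealI[OF R_ring])
    show "subgroup {c \<in> carrier (skew_alg G \<chi> n). \<forall>k<j. \<forall>u. c (k, u) = 0} (add_monoid (skew_alg G \<chi> n))"
    proof (rule R.add.subgroupI)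
      show "{c \<in> carrier (skew_alg G \<chi> n). \<forall>k<j. \<forall>u. c (k, u) = 0} \<subseteq> carrier (skew_alg G \<chi> n)" by auto
      show "{c \<in> carrier (skew_alg G \<chi> n). \<forall>k<j. \<forall>u. c (k, u) = 0} \<noteq> {}"
        using R.zero_closed by (auto simp: zero_R)
    next
      fix a assume a: "a \<in> {c \<in> carrier (skew_alg G \<chi> n). \<forall>k<j. \<forall>u. c (k, u) = 0}"
      have ac: "a \<in> carrier (skew_alg G \<chi> n)" using a by auto
      have "(\<ominus>\<^bsub>skew_alg G \<chi> n\<^esub> a \<oplus>\<^bsub>skew_alg G \<chi> n\<^esub> a) x = \<zero>\<^bsub>skew_alg G \<chi> n\<^esub> x" for x
        using R.l_neg[OF ac] by simp
      hence "(\<ominus>\<^bsub>skew_alg G \<chi> n\<^esub> a) x + a x = 0" for x by (simp add: add_R zero_R)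
      note e = this
      show "\<ominus>\<^bsub>skew_alg G \<chi> n\<^esub> a \<in> {c \<in> carrier (skew_alg G \<chi> n). \<forall>k<j. \<forall>u. c (k, u) = 0}"
      proof (intro CollectI conjI allI impI)
        show "\<ominus>\<^bsub>skew_alg G \<chi> n\<^esub> a \<in> carrier (skew_alg G \<chi> n)" by (rule R.a_inv_closed[OF ac])
        fix k u assume "k < j"
        then have "a (k, u) = 0" using a by auto
        then show "(\<ominus>\<^bsub>skew_alg G \<chi> n\<^esub> a) (k, u) = 0" using e[of "(k, u)"] by simp
      qed
    next
      fix a b assume a: "a \<in> {c \<in> carrier (skew_alg G \<chi> n). \<forall>k<j. \<forall>u. c (k, u) = 0}"
        and b: "b \<in> {c \<in> carrier (skew_alg G \<chi> n). \<forall>k<j. \<forall>u. c (k, u) = 0}"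
      then show "a \<oplus>\<^bsub>skew_alg G \<chi> n\<^esub> b \<in> {c \<in> carrier (skew_alg G \<chi> n). \<forall>k<j. \<forall>u. c (k, u) = 0}"
        by (auto simp: add_R)
    qed
  next
    fix a x assume a: "a \<in> {c \<in> carrier (skew_alg G \<chi> n). \<forall>k<j. \<forall>u. c (k, u) = 0}"
      and x: "x \<in> carrier (skew_alg G \<chi> n)"
    have "(x \<otimes>\<^bsub>skew_alg G \<chi> n\<^esub> a) (k, u) = 0" if "k < j" for k u
    proof -
      have "(\<Sum>i\<le>k. \<Sum>s\<in>carrier G. inverse (\<chi> s) ^ (k - i) * x (i, s) * a (k - i, inv\<^bsub>G\<^esub> s \<otimes>\<^bsub>G\<^esub> u)) = 0"
        using a that by (intro sum.neutral ballI) auto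
      then show ?thesis by (subst mult_R) simp
    qed
    then show "x \<otimes>\<^bsub>skew_alg G \<chi> n\<^esub> a \<in> {c \<in> carrier (skew_alg G \<chi> n). \<forall>k<j. \<forall>u. c (k, u) = 0}"
      using R_m_closed by auto
  next
    fix a x assume a: "a \<in> {c \<in> carrier (skew_alg G \<chi> n). \<forall>k<j. \<forall>u. c (k, u) = 0}"
      and x: "x \<in> carrier (skew_alg G \<chi> n)"
    have "(a \<otimes>\<^bsub>skew_alg G \<chi> n\<^esub> x) (k, u) = 0" if "k < j" for k u
    proof -
      have "(\<Sum>i\<le>k. \<Sum>s\<in>carrier G. inverse (\<chi> s) ^ (k - i) * a (i, s) * x (k - i, inv\<^bsub>G\<^esub> s \<otimes>\<^bsub>G\<^esub> u)) = 0"
        using a that by (intro sum.neutral ballI) auto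
      then show ?thesis by (subst mult_R) simp
    qed
    then show "a \<otimes>\<^bsub>skew_alg G \<chi> n\<^esub> x \<in> {c \<in> carrier (skew_alg G \<chi> n). \<forall>k<j. \<forall>u. c (k, u) = 0}"
      using R_m_closed by auto
  qed
qed

end

lemma ideals_differ:
  fixes G :: "('g,'b) monoid_scheme" and \<chi> :: "'g \<Rightarrow> 'k::field" and n :: nat
  assumes grp: "group G" and fin: "finite (carrier G)"
    and nz: "\<And>s. s \<in> carrier G \<Longrightarrow> \<chi> s \<noteq> 0"
    and chim: "\<And>s t. s \<in> carrier G \<Longrightarrow> t \<in> carrier G \<Longrightarrow> \<chi> (s \<otimes>\<^bsub>G\<^esub> t) = \<chi> s * \<chi> t"
    and ij: "i < j" "j < n" and hi: "\<exists>s\<in>carrier G. hi s \<noteq> 0"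
  shows "genideal (skew_alg G \<chi> n) {zpow_times G i hi} \<noteq> genideal (skew_alg G \<chi> n) {zpow_times G j hj}"
proof
  let ?J = "{c \<in> carrier (skew_alg G \<chi> n). \<forall>k<j. \<forall>u. c (k, u) = 0}"
  assume eq: "genideal (skew_alg G \<chi> n) {zpow_times G i hi} = genideal (skew_alg G \<chi> n) {zpow_times G j hj}"
  have npos: "0 < n" using ij by auto
  have Jid: "ideal ?J (skew_alg G \<chi> n)" by (rule J_ideal[OF grp fin nz chim npos])
  have "zpow_times G j hj \<in> ?J" using ij by (auto simp: skew_alg_def zpow_times_def)
  hence "genideal (skew_alg G \<chi> n) {zpow_times G j hj} \<subseteq> ?J"
    unfolding genideal_def using Jid by blast
  moreover have "zpow_times G i hi \<in> genideal (skew_alg G \<chi> n) {zpow_times G i hi}"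
    unfolding genideal_def by blast
  moreover have "zpow_times G i hi \<notin> ?J"
  proof
    assume "zpow_times G i hi \<in> ?J"
    then have "\<forall>u. zpow_times G i hi (i, u) = 0" using ij by auto
    then show False using hi by (auto simp: zpow_times_def) metis
  qed
  ultimately show False using eq by auto
qed


theorem lemma3p4:
  fixes G :: "('g, 'b) monoid_scheme"
    and \<chi> :: "'g \<Rightarrow> 'k::field_char_0"
    and g :: 'g and n :: nat
    and h :: "nat \<Rightarrow> 'g \<Rightarrow> 'k"
  assumes "alg_closed TYPE('k)"
    and "group G" and "finite (carrier G)"
    and "\<And>s. s \<in> carrier G \<Longrightarrow> \<chi> s \<noteq> 0"
    and "\<And>s t. s \<in> carrier G \<Longrightarrow> t \<in> carrier G \<Longrightarrow> \<chi> (s \<otimes>\<^bsub>G\<^esub> t) = \<chi> s * \<chi> t"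
    and "g \<in> carrier G" and "\<And>s. s \<in> carrier G \<Longrightarrow> g \<otimes>\<^bsub>G\<^esub> s = s \<otimes>\<^bsub>G\<^esub> g"
    and "2 \<le> n" and "\<chi> g ^ n = 1" and "\<And>m. 0 < m \<Longrightarrow> m < n \<Longrightarrow> \<chi> g ^ m \<noteq> 1"
    and "\<And>i. i < n \<Longrightarrow> \<exists>s\<in>carrier G. h i s \<noteq> 0"
  shows "\<forall>i<n. \<forall>j<n. i \<noteq> j \<longrightarrow>
           genideal (skew_alg G \<chi> n) {zpow_times G i (h i)}
             \<noteq> genideal (skew_alg G \<chi> n) {zpow_times G j (h j)}"
proof (intro allI impI)
  fix i j assume i: "i < n" and j: "j < n" and ij: "i \<noteq> j"
  show "genideal (skew_alg G \<chi> n) {zpow_times G i (h i)} \<noteq> genideal (skew_alg G \<chi> n) {zpow_times G j (h j)}"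
  proof (cases "i < j")
    case True
    show ?thesis by (rule ideals_differ[OF assms(2) assms(3) assms(4) assms(5) True j assms(11)[OF i]])
  next
    case False
    then have "j < i" using ij by auto
    from ideals_differ[OF assms(2) assms(3) assms(4) assms(5) this i assms(11)[OF j]]
    show ?thesis by metis
  qed
qed

end
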